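(* Let ${\mathcal O}$ be a non-even nilpotent orbit with Jordan type ${\bf d}=[d_1,\dots,d_k]$ in a classical simple Lie algebra, and let $\Theta_1$ be the set of simple roots of weight $1$ in its weighted Dynkin diagram. If ${\mathcal O}$ is in one of the cases (i) $\mathfrak{sl}_n$; (ii) $\mathfrak{so}_{2n+1}$ (resp. $\mathfrak{sp}_{2n}$) with an odd (resp. even) $q\ge0$ such that $d_1,\dots,d_q$ are odd and $d_{q+1},\dots,d_k$ even; (iii-a) $\mathfrak{so}_{2n}$ with an even $q\ge4$ such that $d_1,\dots,d_q$ are odd and the rest even — then $|\Theta_1|$ is even. If ${\mathcal O}\subset\mathfrak{so}_{2n}$ has exactly two odd parts, at positions $2t-1,2t$ ($t\ge1$), then: if $t=1$, $\alpha_n\in\Theta_1$ and $|\Theta_1|$ is odd; if $k=2t\ge4$, $|\Theta_1|$ is even and $\alpha_{n-1},\alpha_n\in\Theta_1$; if $k>2t\ge4$, $|\Theta_1|$ is even.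
   Context: Parts satisfy $d_1\ge\dots\ge d_k$. Weighted Dynkin diagram: for an $\mathfrak{sl}_2$-triple $(x,y,h)$, $x\in{\mathcal O}$, $h$ in a fixed Cartan subalgebra and dominant, the simple root $\alpha$ gets weight $\alpha(h)\in\{0,1,2\}$; ${\mathcal O}$ is even if no weight equals $1$. Simple roots labelled as in Bourbaki ($\alpha_{n-1},\alpha_n$ the fork nodes in type $D_n$). *)

theory Defs
  imports Main
begin

text \<open>Nilpotent orbits in the classical simple Lie algebras are parametrised by
their Jordan types (partitions).  The weighted Dynkin diagram of the orbit is
computed from the partition by the standard recipe (Collingwood--McGovern):
the neutral element h of an sl2-triple acts with eigenvalues
d-1, d-3, ..., 1-d on each Jordan block of size d; listing all eigenvalues
in non-increasing order as h_1 >= h_2 >= ..., the dominant h has these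
coordinates and the simple root weights are read off in Bourbaki labelling.\<close>

datatype ctype = TA | TB | TC | TD
  \<comment> \<open>TA: sl_N, TB: so_(2n+1), TC: sp_(2n), TD: so_(2n)\<close>

definition hvals :: "nat list \<Rightarrow> int list" where
  "hvals d = rev (sort (concat (map (\<lambda>m. map (\<lambda>j. int m - 1 - 2 * int j) [0..<m]) d)))"

definition hc :: "nat list \<Rightarrow> nat \<Rightarrow> int" where
  "hc d i = hvals d ! (i - 1)"   \<comment> \<open>1-indexed coordinate h_i\<close>

definition rank :: "ctype \<Rightarrow> nat list \<Rightarrow> nat" where
  "rank T d = (case T of
      TA \<Rightarrow> sum_list d - 1
    | TB \<Rightarrow> (sum_list d - 1) div 2
    | TC \<Rightarrow> sum_list d div 2
    | TD \<Rightarrow> sum_list d div 2)"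

text \<open>Weight of the simple root alpha_i, 1 <= i <= rank.\<close>
definition wt :: "ctype \<Rightarrow> nat list \<Rightarrow> nat \<Rightarrow> int" where
  "wt T d i = (if T = TA \<or> i < rank T d then hc d i - hc d (i + 1)
     else (case T of
        TA \<Rightarrow> 0
      | TB \<Rightarrow> hc d i
      | TC \<Rightarrow> 2 * hc d i
      | TD \<Rightarrow> hc d (i - 1) + hc d i))"

definition Theta1 :: "ctype \<Rightarrow> nat list \<Rightarrow> nat set" where
  "Theta1 T d = {i \<in> {1..rank T d}. wt T d i = 1}"

definition non_even :: "ctype \<Rightarrow> nat list \<Rightarrow> bool" where
  "non_even T d = (\<exists>i \<in> {1..rank T d}. wt T d i = 1)"

definition valid_jordan_type :: "ctype \<Rightarrow> nat list \<Rightarrow> bool" where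
  "valid_jordan_type T d = (sorted_wrt (\<ge>) d \<and> (\<forall>x \<in> set d. x > 0) \<and>
     (case T of
        TA \<Rightarrow> sum_list d \<ge> 2
      | TB \<Rightarrow> odd (sum_list d) \<and> sum_list d \<ge> 3 \<and>
              (\<forall>m. even m \<longrightarrow> even (count_list d m))
      | TC \<Rightarrow> even (sum_list d) \<and> sum_list d \<ge> 2 \<and>
              (\<forall>m. odd m \<longrightarrow> even (count_list d m))
      | TD \<Rightarrow> even (sum_list d) \<and> sum_list d \<ge> 6 \<and>
              (\<forall>m. even m \<longrightarrow> even (count_list d m))))"

definition parity_split :: "nat list \<Rightarrow> nat \<Rightarrow> bool" where
  "parity_split d q = (q \<le> length d \<and> (\<forall>i < q. odd (d ! i)) \<and>
     (\<forall>i. q \<le> i \<and> i < length d \<longrightarrow> even (d ! i)))"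

end

theory Submission
  imports Defs "HOL-Library.Multiset"
begin

definition blk :: "nat \<Rightarrow> int list" where
  "blk = (\<lambda>m. map (\<lambda>j. int m - 1 - 2 * int j) [0..<m])"

definition cc :: "nat list \<Rightarrow> int list" where
  "cc d = concat (map blk d)"

lemma hvals_cc: "hvals d = rev (sort (cc d))"
  by (simp add: hvals_def cc_def blk_def)

lemma length_hvals: "length (hvals d) = sum_list d"
proof -
  have "length (cc d) = sum_list d"
    by (induction d) (auto simp: cc_def blk_def)
  then show ?thesis by (simp add: hvals_cc)
qed

lemma sorted_hvals: "sorted_wrt (\<ge>) (hvals d)"
  by (simp add: hvals_cc sorted_wrt_rev)

lemma mem_blk: "x \<in> set (blk m) \<longleftrightarrow> (\<bar>x\<bar> < int m \<and> even (x + int m - 1))"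
proof
  assume "x \<in> set (blk m)"
  then obtain j where "j < m" "x = int m - 1 - 2 * int j" by (auto simp: blk_def)
  then show "\<bar>x\<bar> < int m \<and> even (x + int m - 1)" by presburger
next
  assume a: "\<bar>x\<bar> < int m \<and> even (x + int m - 1)"
  then obtain j where j: "int m - 1 - x = 2 * j" by (metis evenE add_diff_eq diff_diff_eq2 even_minus even_add minus_diff_eq)
  define k where "k = nat j"
  have "k < m" "x = int m - 1 - 2 * int k" using a j by (auto simp: k_def)
  then show "x \<in> set (blk m)" by (auto simp: blk_def)
qed

lemma set_hvals: "x \<in> set (hvals d) \<longleftrightarrow> (\<exists>m\<in>set d. \<bar>x\<bar> < int m \<and> even (x + int m - 1))"
  by (auto simp: hvals_cc cc_def mem_blk)

lemma blk_neg: "map uminus (blk m) = rev (blk m)"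
  by (rule nth_equalityI) (auto simp: blk_def rev_nth of_nat_diff)

lemma mset_neg_cc: "mset (map uminus (cc d)) = mset (cc d)"
proof (induction d)
  case Nil then show ?case by (simp add: cc_def)
next
  case (Cons m ms)
  have "mset (map uminus (blk m)) = mset (blk m)" by (simp add: blk_neg)
  with Cons show ?case by (simp add: cc_def)
qed

lemma hvals_neg: "map uminus (hvals d) = rev (hvals d)"
proof -
  let ?s = "sort (cc d)"
  have "sort (cc d) = rev (map uminus ?s)"
  proof (rule properties_for_sort)
    show "mset (rev (map uminus ?s)) = mset (cc d)"
      using mset_neg_cc[of d] by (metis mset_map mset_rev mset_sort)
    show "sorted (rev (map uminus ?s))"
      unfolding sorted_wrt_rev sorted_wrt_map
      by (rule sorted_wrt_mono_rel[OF _ sorted_sort]) auto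
  qed
  then show ?thesis by (simp add: hvals_cc rev_map)
qed

lemma hvals_sym:
  assumes "j < sum_list d"
  shows "hvals d ! (sum_list d - 1 - j) = - hvals d ! j"
proof -
  have "rev (hvals d) ! j = - hvals d ! j" using assms
    by (metis hvals_neg length_hvals nth_map)
  then show ?thesis using assms by (simp add: rev_nth length_hvals)
qed

lemma count_list_dist: "distinct xs \<Longrightarrow> count_list xs x = (if x \<in> set xs then 1 else 0)"
  by (induction xs) auto

lemma count0_blk: "count_list (blk m) 0 = (if odd m then 1 else 0)"
proof -
  have "distinct (blk m)" unfolding blk_def
    by (subst distinct_map) (auto simp: inj_on_def)
  moreover have "0 \<in> set (blk m) \<longleftrightarrow> odd m" by (simp add: mem_blk) presburger
  ultimately show ?thesis
    by (simp add: count_list_dist)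
qed

lemma sorted_ge_nth:
  fixes xs :: "int list"
  assumes "sorted_wrt (\<ge>) xs" "i \<le> j" "j < length xs"
  shows "xs ! j \<le> xs ! i"
  using assms sorted_wrt_nth_less[OF assms(1), of i j] by (cases "i = j") auto

lemma gap_count:
  fixes xs :: "int list"
  assumes srt: "sorted_wrt (\<ge>) xs"
  shows "card {j. Suc j < length xs \<and> xs ! j - xs ! Suc j = 1 \<and> P (xs ! Suc j)}
       = card {v. v \<in> set xs \<and> v + 1 \<in> set xs \<and> P v}"
proof (rule bij_betw_same_card[of "\<lambda>j. xs ! Suc j"])
  let ?G = "{j. Suc j < length xs \<and> xs ! j - xs ! Suc j = 1 \<and> P (xs ! Suc j)}"
  let ?V = "{v. v \<in> set xs \<and> v + 1 \<in> set xs \<and> P v}"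
  have inj: "inj_on (\<lambda>j. xs ! Suc j) ?G"
  proof (rule inj_onI)
    have lt: "xs ! Suc j < xs ! Suc i" if "i \<in> ?G" "j \<in> ?G" "i < j" for i j
    proof -
      have "xs ! j \<le> xs ! Suc i" using sorted_ge_nth[OF srt, of "Suc i" j] that by auto
      then show ?thesis using that by auto
    qed
    fix i j assume "i \<in> ?G" "j \<in> ?G" "xs ! Suc i = xs ! Suc j"
    then show "i = j" using lt[of i j] lt[of j i] by (cases "i < j"; cases "j < i") auto
  qed
  have img: "(\<lambda>j. xs ! Suc j) ` ?G = ?V"
  proof
    show "(\<lambda>j. xs ! Suc j) ` ?G \<subseteq> ?V"
    proof
      fix v assume "v \<in> (\<lambda>j. xs ! Suc j) ` ?G"
      then obtain j where j: "j \<in> ?G" "v = xs ! Suc j" by auto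
      then have "v + 1 = xs ! j" by auto
      then show "v \<in> ?V" using j by auto
    qed
    show "?V \<subseteq> (\<lambda>j. xs ! Suc j) ` ?G"
    proof
      fix v assume v: "v \<in> ?V"
      then obtain p where p: "p < length xs" "xs ! p = v" by (auto simp: in_set_conv_nth)
      from v obtain p' where p': "p' < length xs" "xs ! p' = v + 1" by (auto simp: in_set_conv_nth)
      define k where "k = (LEAST k. xs ! k \<le> v)"
      have k1: "xs ! k \<le> v" unfolding k_def by (rule LeastI[of _ p]) (use p in auto)
      have k2: "k \<le> p" unfolding k_def by (rule Least_le) (use p in auto)
      have kl: "k < length xs" using k2 p by auto
      have "xs ! p \<le> xs ! k" using sorted_ge_nth[OF srt k2 p(1)] .
      then have xk: "xs ! k = v" using k1 p by auto
      have pk: "p' < k"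
      proof (rule ccontr)
        assume "\<not> p' < k"
        then have "xs ! p' \<le> xs ! k" using sorted_ge_nth[OF srt _ p'(1)] by auto
        then show False using xk p' by auto
      qed
      then obtain j where j: "k = Suc j" by (cases k) auto
      have "\<not> xs ! j \<le> v" unfolding k_def
        using j not_less_Least[of j "\<lambda>k. xs ! k \<le> v"] k_def by auto
      moreover have "xs ! j \<le> xs ! p'" using sorted_ge_nth[OF srt, of p' j] pk j kl by auto
      ultimately have "xs ! j - xs ! Suc j = 1" using xk j p' by auto
      then have "j \<in> ?G" using j kl xk v by auto
      then show "v \<in> (\<lambda>j. xs ! Suc j) ` ?G" using xk j by force
    qed
  qed
  show "bij_betw (\<lambda>j. xs ! Suc j) ?G ?V" using inj img by (simp add: bij_betw_def)
qed

lemma mem_hvals_nonneg: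
  assumes "0 \<le> v"
    and a: "a \<in> set d" "odd a" "\<forall>m\<in>set d. odd m \<longrightarrow> m \<le> a"
    and b: "b \<in> set d" "even b" "\<forall>m\<in>set d. even m \<longrightarrow> m \<le> b"
  shows "v \<in> set (hvals d) \<longleftrightarrow> (if even v then v < int a else v < int b)"
proof (cases "even v")
  case True
  have "v \<in> set (hvals d) \<longleftrightarrow> v < int a"
  proof
    assume "v \<in> set (hvals d)"
    then obtain m where m: "m \<in> set d" "\<bar>v\<bar> < int m" "even (v + int m - 1)" by (auto simp: set_hvals)
    then have "odd m" using True by presburger
    then have "m \<le> a" using a m by auto
    then show "v < int a" using m assms(1) by auto
  next
    assume "v < int a" then show "v \<in> set (hvals d)" using a True assms(1)
      by (auto simp: set_hvals intro!: bexI[of _ a])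
  qed
  then show ?thesis using True by simp
next
  case False
  have "v \<in> set (hvals d) \<longleftrightarrow> v < int b"
  proof
    assume "v \<in> set (hvals d)"
    then obtain m where m: "m \<in> set d" "\<bar>v\<bar> < int m" "even (v + int m - 1)" by (auto simp: set_hvals)
    then have "even m" using False by presburger
    then have "m \<le> b" using b m by auto
    then show "v < int b" using m assms(1) by auto
  next
    assume "v < int b" then show "v \<in> set (hvals d)" using b False assms(1)
      by (auto simp: set_hvals intro!: bexI[of _ b])
  qed
  then show ?thesis using False by simp
qed

lemma arith1: fixes v A B :: int assumes "odd A" "even B" "0 \<le> v"
 shows "((if even v then v < A else v < B) \<and> (if even (v+1) then v+1 < A else v+1 < B)) \<longleftrightarrow> v < min A B"
proof (cases "even v")
  case True
  have "v + 1 \<noteq> B" using True assms by auto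
  then show ?thesis using True by (auto simp: min_def)
next
  case False
  have "v + 1 \<noteq> A" using False assms by auto
  then show ?thesis using False by (auto simp: min_def)
qed

lemma vals_pos:
  assumes a: "a \<in> set d" "odd a" "\<forall>m\<in>set d. odd m \<longrightarrow> m \<le> a"
    and b: "b \<in> set d" "even b" "\<forall>m\<in>set d. even m \<longrightarrow> m \<le> b"
  shows "card {v. v \<in> set (hvals d) \<and> v + 1 \<in> set (hvals d) \<and> 0 \<le> v} = min a b"
proof -
  have "{v. v \<in> set (hvals d) \<and> v + 1 \<in> set (hvals d) \<and> 0 \<le> v} = {0..<int (min a b)}"
  proof (rule set_eqI)
    fix v
    show "v \<in> {v. v \<in> set (hvals d) \<and> v + 1 \<in> set (hvals d) \<and> 0 \<le> v} \<longleftrightarrow> v \<in> {0..<int (min a b)}"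
    proof (cases "0 \<le> v")
      case True
      have "0 \<le> v + 1" using True by simp
      note e1 = mem_hvals_nonneg[OF True a b] and e2 = mem_hvals_nonneg[OF this a b]
      have "odd (int a)" "even (int b)" using a(2) b(2) by auto
      from arith1[OF this True] show ?thesis using True unfolding mem_Collect_eq e1 e2 atLeastLessThan_iff
        by (simp add: min_def)
    qed auto
  qed
  then show ?thesis by simp
qed

lemma vals_none:
  assumes "(\<forall>m\<in>set d. odd m) \<or> (\<forall>m\<in>set d. even m)"
  shows "{v. v \<in> set (hvals d) \<and> v + 1 \<in> set (hvals d) \<and> P v} = {}"
proof -
  have par: "\<exists>m\<in>set d. even (x + int m - 1)" if "x \<in> set (hvals d)" for x
    using that by (auto simp: set_hvals)
  show ?thesis
  proof (rule ccontr)
    assume "\<not> ?thesis"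
    then obtain v where v: "v \<in> set (hvals d)" "v + 1 \<in> set (hvals d)" by auto
    from par[OF v(1)] obtain m where m: "m \<in> set d" "even (v + int m - 1)" by auto
    from par[OF v(2)] obtain m' where m': "m' \<in> set d" "even (v + 1 + int m' - 1)" by auto
    from assms m m' have "odd m = odd m'" by auto
    with m(2) m'(2) show False by presburger
  qed
qed

lemma vals_sym:
  "card {v. v \<in> set (hvals d) \<and> v + 1 \<in> set (hvals d) \<and> True}
   = 2 * card {v. v \<in> set (hvals d) \<and> v + 1 \<in> set (hvals d) \<and> 0 \<le> v}"
proof -
  let ?S = "set (hvals d)"
  have sy: "x \<in> ?S \<longleftrightarrow> - x \<in> ?S" for x
  proof -
    have "even (x + int m - 1) \<longleftrightarrow> even (- x + int m - 1)" for m by presburger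
    then show ?thesis by (simp add: set_hvals)
  qed
  let ?P = "{v. v \<in> ?S \<and> v + 1 \<in> ?S \<and> 0 \<le> v}"
  let ?N = "{v. v \<in> ?S \<and> v + 1 \<in> ?S \<and> v < 0}"
  have fP: "finite ?P" by (rule finite_subset[of _ ?S]) auto
  have eq: "{v. v \<in> ?S \<and> v + 1 \<in> ?S \<and> True} = ?P \<union> ?N" by auto
  have NP: "?N = (\<lambda>v. - v - 1) ` ?P"
  proof
    show "?N \<subseteq> (\<lambda>v. - v - 1) ` ?P"
    proof
      fix v assume v: "v \<in> ?N"
      have v1: "v \<in> ?S" "v + 1 \<in> ?S" "v < 0" using v by auto
      have m1: "- (v + 1) \<in> ?S" using v1(2) sy[of "v+1"] by blast
      have m2: "- v \<in> ?S" using v1(1) sy[of v] by blast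
      have e1: "- (v + 1) = - v - 1" by simp
      have "- v - 1 \<in> ?S" using m1[unfolded e1] .
      moreover have "- v - 1 + 1 \<in> ?S" using m2 by simp
      moreover have "0 \<le> - v - 1" using v1(3) by simp
      ultimately have "- v - 1 \<in> ?P" by blast
      moreover have "v = - (- v - 1) - 1" by simp
      ultimately show "v \<in> (\<lambda>v. - v - 1) ` ?P" by blast
    qed
    show "(\<lambda>v. - v - 1) ` ?P \<subseteq> ?N"
    proof
      fix w assume "w \<in> (\<lambda>v. - v - 1) ` ?P"
      then obtain v where v: "v \<in> ?S" "v + 1 \<in> ?S" "0 \<le> v" "w = - v - 1" by blast
      have m1: "- (v + 1) \<in> ?S" using v(2) sy[of "v+1"] by blast
      have m2: "- v \<in> ?S" using v(1) sy[of v] by blast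
      have e1: "- (v + 1) = w" and e2: "- v = w + 1" using v(4) by simp_all
      have "w \<in> ?S" using m1[unfolded e1] .
      moreover have "w + 1 \<in> ?S" using m2[unfolded e2] .
      moreover have "w < 0" using v(3,4) by simp
      ultimately show "w \<in> ?N" by blast
    qed
  qed
  have "card ?N = card ?P" unfolding NP by (rule card_image) (auto simp: inj_on_def)
  moreover have "card (?P \<union> ?N) = card ?P + card ?N"
    by (rule card_Un_disjoint) (use fP NP in auto)
  ultimately show ?thesis unfolding eq by simp
qed

definition G0 :: "nat list \<Rightarrow> nat set" where
  "G0 d = {j. Suc j < length (hvals d) \<and> hvals d ! j - hvals d ! Suc j = 1 \<and> 0 \<le> hvals d ! Suc j}"

definition cnt :: "nat list \<Rightarrow> nat" where
  "cnt d = card {v. v \<in> set (hvals d) \<and> v + 1 \<in> set (hvals d) \<and> 0 \<le> v}"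

lemma finite_G0: "finite (G0 d)"
  by (rule finite_subset[of _ "{..<length (hvals d)}"]) (auto simp: G0_def)

lemma card_G0: "card (Suc ` G0 d) = cnt d"
proof -
  have "card (Suc ` G0 d) = card (G0 d)" by (simp add: card_image)
  also have "\<dots> = cnt d" unfolding G0_def cnt_def
    by (rule gap_count[OF sorted_hvals, of d "\<lambda>v. 0 \<le> v"])
  finally show ?thesis .
qed

lemma hc_eq: "i \<ge> 1 \<Longrightarrow> hc d i = hvals d ! (i - 1)"
  by (simp add: hc_def)

lemma thetaA: "even (card (Theta1 TA d))"
proof -
  let ?L = "hvals d"
  let ?G = "{j. Suc j < length ?L \<and> ?L ! j - ?L ! Suc j = 1 \<and> True}"
  have "Theta1 TA d = Suc ` ?G"
  proof (rule set_eqI)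
    fix i
    show "i \<in> Theta1 TA d \<longleftrightarrow> i \<in> Suc ` ?G"
    proof (cases i)
      case 0 then show ?thesis by (auto simp: Theta1_def)
    next
      case (Suc j)
      then show ?thesis
        by (auto simp: Theta1_def wt_def rank_def hc_def length_hvals)
    qed
  qed
  then have "card (Theta1 TA d) = card ?G" by (simp add: card_image)
  also have "\<dots> = card {v. v \<in> set ?L \<and> v + 1 \<in> set ?L \<and> True}"
    by (rule gap_count[OF sorted_hvals])
  also have "\<dots> = 2 * cnt d" unfolding cnt_def by (rule vals_sym)
  finally show ?thesis by simp
qed

lemma even_mid:
  assumes N: "sum_list d = 2 * n" and n: "n \<ge> 1"
  shows "0 \<le> hvals d ! (n - 1)" "hvals d ! n = - hvals d ! (n - 1)"
proof -
  have "hvals d ! (sum_list d - 1 - (n - 1)) = - hvals d ! (n - 1)"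
    by (rule hvals_sym) (use N n in auto)
  moreover have "sum_list d - 1 - (n - 1) = n" using N n by auto
  ultimately show e: "hvals d ! n = - hvals d ! (n - 1)" by simp
  have "hvals d ! n \<le> hvals d ! (n - 1)"
    by (rule sorted_ge_nth[OF sorted_hvals]) (use N n in \<open>auto simp: length_hvals\<close>)
  then show "0 \<le> hvals d ! (n - 1)" using e by simp
qed

lemma odd_mid:
  assumes N: "sum_list d = 2 * n + 1"
  shows "hvals d ! n = 0"
proof -
  have "hvals d ! (sum_list d - 1 - n) = - hvals d ! n"
    by (rule hvals_sym) (use N in auto)
  moreover have "sum_list d - 1 - n = n" using N by auto
  ultimately show ?thesis by simp
qed

lemma low_even:
  assumes N: "sum_list d = 2 * n" and n: "n \<ge> 1"
  shows "{i. 1 \<le> i \<and> i < n \<and> hvals d ! (i - 1) - hvals d ! i = 1} = Suc ` G0 d"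
proof (rule set_eqI)
  let ?L = "hvals d"
  note m = even_mid[OF N n]
  have len: "length ?L = 2 * n" using N by (simp add: length_hvals)
  fix i
  show "i \<in> {i. 1 \<le> i \<and> i < n \<and> ?L ! (i - 1) - ?L ! i = 1} \<longleftrightarrow> i \<in> Suc ` G0 d"
  proof
    assume "i \<in> {i. 1 \<le> i \<and> i < n \<and> ?L ! (i - 1) - ?L ! i = 1}"
    then have i: "1 \<le> i" "i < n" "?L ! (i - 1) - ?L ! i = 1" by auto
    have "?L ! (n - 1) \<le> ?L ! i"
      by (rule sorted_ge_nth[OF sorted_hvals]) (use i len in auto)
    then have "i - 1 \<in> G0 d" using i m len by (auto simp: G0_def)
    then show "i \<in> Suc ` G0 d" using i by (metis Suc_pred' image_eqI less_le_trans zero_less_one)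
  next
    assume "i \<in> Suc ` G0 d"
    then obtain j where j: "i = Suc j" "Suc j < length ?L" "?L ! j - ?L ! Suc j = 1" "0 \<le> ?L ! Suc j"
      by (auto simp: G0_def)
    have "Suc j < n"
    proof (rule ccontr)
      assume "\<not> Suc j < n"
      then consider "j = n - 1" | "n \<le> j" by linarith
      then show False
      proof cases
        case 1
        then have "Suc j = n" using n by simp
        then have "?L ! (n - 1) - ?L ! n = 1" using j 1 by simp
        then have "2 * ?L ! (n - 1) = 1" using m by simp
        then show False by presburger
      next
        case 2
        have "?L ! j \<le> ?L ! n"
          by (rule sorted_ge_nth[OF sorted_hvals]) (use 2 j in auto)
        then show False using j m by simp
      qed
    qed
    then show "i \<in> {i. 1 \<le> i \<and> i < n \<and> ?L ! (i - 1) - ?L ! i = 1}" using j by auto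
  qed
qed

lemma thetaC:
  assumes N: "sum_list d = 2 * n" and n: "n \<ge> 1"
  shows "card (Theta1 TC d) = cnt d"
proof -
  have r: "rank TC d = n" using N by (simp add: rank_def)
  have "Theta1 TC d = {i. 1 \<le> i \<and> i < n \<and> hvals d ! (i - 1) - hvals d ! i = 1}"
  proof (rule set_eqI)
    fix i
    show "i \<in> Theta1 TC d \<longleftrightarrow> i \<in> {i. 1 \<le> i \<and> i < n \<and> hvals d ! (i - 1) - hvals d ! i = 1}"
      unfolding Theta1_def wt_def r using n
      by (cases "i < n") (auto simp: hc_def, presburger)
  qed
  then show ?thesis using low_even[OF N n] card_G0 by simp
qed

lemma thetaD:
  assumes N: "sum_list d = 2 * n" and n: "n \<ge> 2"
  shows "Theta1 TD d = Suc ` G0 d \<union> {i. i = n \<and> hvals d ! (n - 2) + hvals d ! (n - 1) = 1}"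
    "n \<notin> Suc ` G0 d"
proof -
  have r: "rank TD d = n" using N by (simp add: rank_def)
  have "Theta1 TD d = {i. 1 \<le> i \<and> i < n \<and> hvals d ! (i - 1) - hvals d ! i = 1}
     \<union> {i. i = n \<and> hvals d ! (n - 2) + hvals d ! (n - 1) = 1}"
  proof (rule set_eqI)
    fix i
    show "i \<in> Theta1 TD d \<longleftrightarrow> i \<in> {i. 1 \<le> i \<and> i < n \<and> hvals d ! (i - 1) - hvals d ! i = 1}
     \<union> {i. i = n \<and> hvals d ! (n - 2) + hvals d ! (n - 1) = 1}"
      unfolding Theta1_def wt_def r using n
      by (cases "i < n") (auto simp: hc_def numeral_2_eq_2)
  qed
  then show "Theta1 TD d = Suc ` G0 d \<union> {i. i = n \<and> hvals d ! (n - 2) + hvals d ! (n - 1) = 1}"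
    using low_even[OF N] n by simp
  show "n \<notin> Suc ` G0 d" using low_even[OF N] n by (metis (no_types, lifting) mem_Collect_eq less_irrefl dual_order.trans one_le_numeral)
qed

lemma thetaB:
  assumes N: "sum_list d = 2 * n + 1"
  shows "card (Theta1 TB d) = cnt d"
proof -
  let ?L = "hvals d"
  have r: "rank TB d = n" using N by (simp add: rank_def)
  have z: "?L ! n = 0" by (rule odd_mid[OF N])
  have len: "length ?L = 2 * n + 1" using N by (simp add: length_hvals)
  have "Theta1 TB d = Suc ` G0 d"
  proof (rule set_eqI)
    fix i
    have w: "i \<in> Theta1 TB d \<longleftrightarrow> 1 \<le> i \<and> i \<le> n \<and> ?L ! (i - 1) - ?L ! i = 1"
      unfolding Theta1_def wt_def r using z
      by (cases "i < n") (auto simp: hc_def)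
    show "i \<in> Theta1 TB d \<longleftrightarrow> i \<in> Suc ` G0 d"
    proof
      assume "i \<in> Theta1 TB d"
      then have i: "1 \<le> i" "i \<le> n" "?L ! (i - 1) - ?L ! i = 1" using w by auto
      have "?L ! n \<le> ?L ! i"
        by (rule sorted_ge_nth[OF sorted_hvals]) (use i len in auto)
      then have "i - 1 \<in> G0 d" using i z len by (auto simp: G0_def)
      then show "i \<in> Suc ` G0 d" using i by (metis Suc_pred' image_eqI less_le_trans zero_less_one)
    next
      assume "i \<in> Suc ` G0 d"
      then obtain j where j: "i = Suc j" "Suc j < length ?L" "?L ! j - ?L ! Suc j = 1" "0 \<le> ?L ! Suc j"
        by (auto simp: G0_def)
      have "Suc j \<le> n"
      proof (rule ccontr)
        assume "\<not> Suc j \<le> n"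
        have "?L ! j \<le> ?L ! n"
          by (rule sorted_ge_nth[OF sorted_hvals]) (use \<open>\<not> Suc j \<le> n\<close> j in auto)
        then show False using j z by simp
      qed
      then show "i \<in> Theta1 TB d" using w j by auto
    qed
  qed
  then show ?thesis using card_G0 by simp
qed

lemma count_cc: "count_list (cc d) 0 = length (filter odd d)"
  by (induction d) (auto simp: cc_def count0_blk)

lemma zeros: "card {j. j < sum_list d \<and> hvals d ! j = 0} = card {i. i < length d \<and> odd (d ! i)}"
proof -
  have "count_list (hvals d) 0 = count_list (cc d) 0"
    by (simp add: hvals_cc flip: count_mset)
  also have "\<dots> = card {i. i < length d \<and> odd (d ! i)}"
    by (simp add: count_cc length_filter_conv_card)
  finally have "count_list (hvals d) 0 = card {i. i < length d \<and> odd (d ! i)}" .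
  moreover have "count_list (hvals d) 0 = card {j. j < sum_list d \<and> hvals d ! j = 0}"
  proof -
    have "{i. i < length (hvals d) \<and> 0 = hvals d ! i} = {j. j < sum_list d \<and> hvals d ! j = 0}"
      by (auto simp: length_hvals)
    then show ?thesis by (simp add: count_list_eq_length_filter length_filter_conv_card)
  qed
  ultimately show ?thesis by simp
qed

lemma one_in: "1 \<in> set (hvals d) \<longleftrightarrow> (\<exists>m\<in>set d. even m \<and> m \<ge> 2)"
proof
  assume "1 \<in> set (hvals d)"
  then obtain m where m: "m \<in> set d" "1 < int m" "even (1 + int m - 1)" by (auto simp: set_hvals)
  then have "even m" "m \<ge> 2" by auto
  then show "\<exists>m\<in>set d. even m \<and> m \<ge> 2" using m by auto
next
  assume "\<exists>m\<in>set d. even m \<and> m \<ge> 2"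
  then obtain m where m: "m \<in> set d" "even m" "m \<ge> 2" by auto
  then have "\<bar>1::int\<bar> < int m" "even (1 + int m - 1)" by auto
  then show "1 \<in> set (hvals d)" unfolding set_hvals using m(1) by blast
qed

lemma D1:
  assumes N: "sum_list d = 2 * n" and n: "n \<ge> 2"
    and Z: "card {j. j < sum_list d \<and> hvals d ! j = 0} \<ge> 3"
  shows "hvals d ! (n - 2) + hvals d ! (n - 1) \<noteq> 1"
proof
  let ?L = "hvals d"
  assume s: "?L ! (n - 2) + ?L ! (n - 1) = 1"
  note m = even_mid[OF N, of] 
  have m0: "0 \<le> ?L ! (n - 1)" using m n by auto
  have len: "length ?L = 2 * n" using N by (simp add: length_hvals)
  have "?L ! (n - 1) \<le> ?L ! (n - 2)"
    by (rule sorted_ge_nth[OF sorted_hvals]) (use n len in auto)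
  then have a1: "?L ! (n - 2) = 1" using s m0 by linarith
  have sym: "?L ! (n + 1) = - ?L ! (n - 2)"
  proof -
    have "?L ! (sum_list d - 1 - (n - 2)) = - ?L ! (n - 2)" by (rule hvals_sym) (use N n in auto)
    moreover have "sum_list d - 1 - (n - 2) = n + 1" using N n by auto
    ultimately show ?thesis by simp
  qed
  have "{j. j < sum_list d \<and> ?L ! j = 0} \<subseteq> {n - 1, n}"
  proof
    fix j assume j: "j \<in> {j. j < sum_list d \<and> ?L ! j = 0}"
    show "j \<in> {n - 1, n}"
    proof (rule ccontr)
      assume "j \<notin> {n - 1, n}"
      then have "j \<noteq> n - 1" "j \<noteq> n" by auto
      then consider "j \<le> n - 2" | "n + 1 \<le> j" using n by arith
      then show False
      proof cases
        case 1
        have "?L ! (n - 2) \<le> ?L ! j" by (rule sorted_ge_nth[OF sorted_hvals]) (use 1 n len in auto)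
        then show False using a1 j by simp
      next
        case 2
        have "?L ! j \<le> ?L ! (n + 1)" by (rule sorted_ge_nth[OF sorted_hvals]) (use 2 j len N in auto)
        then show False using a1 j sym by simp
      qed
    qed
  qed
  then have "card {j. j < sum_list d \<and> ?L ! j = 0} \<le> card {n - 1, n}" by (rule card_mono[rotated]) auto
  also have "\<dots> \<le> 2" by (rule card_insert_le_m1) auto
  finally show False using Z by simp
qed

lemma D2:
  assumes N: "sum_list d = 2 * n" and n: "n \<ge> 2"
    and Z: "card {j. j < sum_list d \<and> hvals d ! j = 0} = 2"
  shows "hvals d ! (n - 1) = 0" "hvals d ! (n - 2) \<ge> 1"
proof -
  let ?L = "hvals d"
  note m = even_mid[OF N]
  have len: "length ?L = 2 * n" using N by (simp add: length_hvals)
  show z: "?L ! (n - 1) = 0"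
  proof (rule ccontr)
    assume "?L ! (n - 1) \<noteq> 0"
    then have pos: "?L ! (n - 1) > 0" using m n by force
    have "{j. j < sum_list d \<and> ?L ! j = 0} = {}"
    proof (rule ccontr)
      assume "{j. j < sum_list d \<and> ?L ! j = 0} \<noteq> {}"
      then obtain j where j: "j < 2 * n" "?L ! j = 0" using N by auto
      show False
      proof (cases "j \<le> n - 1")
        case True
        have "?L ! (n - 1) \<le> ?L ! j" by (rule sorted_ge_nth[OF sorted_hvals]) (use True n len in auto)
        then show False using pos j by simp
      next
        case False
        have "?L ! j \<le> ?L ! n" by (rule sorted_ge_nth[OF sorted_hvals]) (use False j len in auto)
        then show False using pos j m n by simp
      qed
    qed
    then show False using Z by (metis card.empty zero_neq_numeral)
  qed
  have "?L ! (n - 1) \<le> ?L ! (n - 2)"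
    by (rule sorted_ge_nth[OF sorted_hvals]) (use n len in auto)
  moreover have "?L ! (n - 2) \<noteq> 0"
  proof
    assume z2: "?L ! (n - 2) = 0"
    have "{n - 2, n - 1, n} \<subseteq> {j. j < sum_list d \<and> ?L ! j = 0}" using z z2 m n N by auto
    then have "card {n - 2, n - 1, n} \<le> card {j. j < sum_list d \<and> ?L ! j = 0}" by (rule card_mono[rotated]) auto
    moreover have "card {n - 2, n - 1, n} = 3"
    proof -
      have "n - 2 \<notin> {n - 1, n}" "n - 1 \<notin> {n}" using n by auto
      then show ?thesis by simp
    qed
    ultimately show False using Z by simp
  qed
  ultimately show "?L ! (n - 2) \<ge> 1" using z by linarith
qed

lemma D3:
  assumes N: "sum_list d = 2 * n" and n: "n \<ge> 2"
    and z: "hvals d ! (n - 1) = 0" and one: "1 \<in> set (hvals d)"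
  shows "hvals d ! (n - 2) \<le> 1"
proof -
  let ?L = "hvals d"
  have len: "length ?L = 2 * n" using N by (simp add: length_hvals)
  obtain p where p: "p < length ?L" "?L ! p = 1" using one by (auto simp: in_set_conv_nth)
  have "p \<le> n - 2"
  proof (rule ccontr)
    assume "\<not> p \<le> n - 2"
    then have "?L ! p \<le> ?L ! (n - 1)" by (intro sorted_ge_nth[OF sorted_hvals]) (use p in auto)
    then show False using p z by simp
  qed
  then have "?L ! (n - 2) \<le> ?L ! p" by (intro sorted_ge_nth[OF sorted_hvals]) (use p len n in auto)
  then show ?thesis using p by simp
qed

lemma sorted_ge_nat:
  fixes xs :: "nat list"
  assumes "sorted_wrt (\<ge>) xs" "i \<le> j" "j < length xs"
  shows "xs ! j \<le> xs ! i"
  using assms sorted_wrt_nth_less[OF assms(1), of i j] by (cases "i = j") auto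

lemma ps_cnt:
  assumes srt: "sorted_wrt (\<ge>) d" and ps: "parity_split d q"
  shows "even (cnt d)"
proof -
  have q: "q \<le> length d" "\<forall>i<q. odd (d ! i)" "\<forall>i. q \<le> i \<and> i < length d \<longrightarrow> even (d ! i)"
    using ps by (auto simp: parity_split_def)
  show ?thesis
  proof (cases "q = 0 \<or> q = length d")
    case True
    have oe: "(\<forall>m\<in>set d. odd m) \<or> (\<forall>m\<in>set d. even m)"
    proof (cases "q = 0")
      case q0: True
      have "\<forall>m\<in>set d. even m"
      proof
        fix m assume "m \<in> set d"
        then obtain i where i: "i < length d" "m = d ! i" by (auto simp: in_set_conv_nth)
        then show "even m" using q(3) q0 by simp
      qed
      then show ?thesis ..
    next
      case q0: False
      then have ql: "q = length d" using True by simp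
      have "\<forall>m\<in>set d. odd m"
      proof
        fix m assume "m \<in> set d"
        then obtain i where i: "i < length d" "m = d ! i" by (auto simp: in_set_conv_nth)
        then show "odd m" using q(2) ql by simp
      qed
      then show ?thesis ..
    qed
    have e: "{v. v \<in> set (hvals d) \<and> v + 1 \<in> set (hvals d) \<and> 0 \<le> v} = {}"
      by (rule vals_none[OF oe])
    show ?thesis unfolding cnt_def e by simp
  next
    case False
    then have q0: "0 < q" "q < length d" using q by auto
    have a: "d ! 0 \<in> set d" "odd (d ! 0)" "\<forall>m\<in>set d. odd m \<longrightarrow> m \<le> d ! 0"
    proof -
      show "d ! 0 \<in> set d" using q0 by (intro nth_mem) auto
      show "odd (d ! 0)" using q(2) q0 by blast
      show "\<forall>m\<in>set d. odd m \<longrightarrow> m \<le> d ! 0"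
      proof (intro ballI impI)
        fix m assume "m \<in> set d"
        then obtain i where i: "i < length d" "m = d ! i" by (auto simp: in_set_conv_nth)
        then show "m \<le> d ! 0" using sorted_ge_nat[OF srt, of 0 i] by simp
      qed
    qed
    have b: "d ! q \<in> set d" "even (d ! q)" "\<forall>m\<in>set d. even m \<longrightarrow> m \<le> d ! q"
    proof -
      show "d ! q \<in> set d" "even (d ! q)" using q q0 by auto
      show "\<forall>m\<in>set d. even m \<longrightarrow> m \<le> d ! q"
      proof (intro ballI impI)
        fix m assume "m \<in> set d" "even m"
        then obtain i where i: "i < length d" "m = d ! i" by (auto simp: in_set_conv_nth)
        have "q \<le> i"
        proof (rule ccontr)
          assume "\<not> q \<le> i"
          then have "odd (d ! i)" using q(2) by simp
          then show False using i \<open>even m\<close> by simp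
        qed
        then show "m \<le> d ! q" using i sorted_ge_nat[OF srt] by auto
      qed
    qed
    have "d ! q \<le> d ! 0" using sorted_ge_nat[OF srt, of 0 q] q0 by auto
    then have "min (d ! 0) (d ! q) = d ! q" by simp
    then show ?thesis using vals_pos[OF a b] b(2) by (simp add: cnt_def)
  qed
qed

lemma two_odd_cnt:
  assumes srt: "sorted_wrt (\<ge>) d" and t: "t \<ge> 2"
    and O: "{i. i < length d \<and> odd (d ! i)} = {2 * t - 2, 2 * t - 1}"
  shows "odd (cnt d)"
proof -
  have inO: "i < length d \<and> odd (d ! i) \<longleftrightarrow> i = 2 * t - 2 \<or> i = 2 * t - 1" for i
    using O by blast
  have l: "2 * t - 1 < length d" using inO[of "2*t-1"] by auto
  have a: "d ! (2*t-2) \<in> set d" "odd (d ! (2*t-2))" "\<forall>m\<in>set d. odd m \<longrightarrow> m \<le> d ! (2*t-2)"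
  proof -
    show "d ! (2*t-2) \<in> set d" using l by (intro nth_mem) auto
    show "odd (d ! (2*t-2))" using l inO[of "2*t-2"] by simp
    show "\<forall>m\<in>set d. odd m \<longrightarrow> m \<le> d ! (2*t-2)"
    proof (intro ballI impI)
      fix m assume "m \<in> set d" "odd m"
      then obtain i where i: "i < length d" "m = d ! i" by (auto simp: in_set_conv_nth)
      then have "i = 2 * t - 2 \<or> i = 2 * t - 1" using inO[of i] \<open>odd m\<close> by auto
      then show "m \<le> d ! (2*t-2)" using i sorted_ge_nat[OF srt, of "2*t-2" i] by auto
    qed
  qed
  have b: "d ! 0 \<in> set d" "even (d ! 0)" "\<forall>m\<in>set d. even m \<longrightarrow> m \<le> d ! 0"
  proof -
    show "d ! 0 \<in> set d" using l by (intro nth_mem) auto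
    show "even (d ! 0)" using l inO[of 0] t by auto
    show "\<forall>m\<in>set d. even m \<longrightarrow> m \<le> d ! 0"
    proof (intro ballI impI)
      fix m assume "m \<in> set d"
      then obtain i where i: "i < length d" "m = d ! i" by (auto simp: in_set_conv_nth)
      then show "m \<le> d ! 0" using sorted_ge_nat[OF srt, of 0 i] by simp
    qed
  qed
  have "d ! (2*t-2) \<le> d ! 0" using sorted_ge_nat[OF srt, of 0 "2*t-2"] l by auto
  then have "min (d ! (2*t-2)) (d ! 0) = d ! (2*t-2)" by simp
  then show ?thesis using vals_pos[OF a b] a(2) by (simp add: cnt_def)
qed

lemma valid_facts:
  assumes "valid_jordan_type T d"
  shows "sorted_wrt (\<ge>) d" "\<forall>x\<in>set d. x > 0"
    "T = TB \<Longrightarrow> odd (sum_list d)"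
    "T = TC \<Longrightarrow> even (sum_list d) \<and> sum_list d \<ge> 2"
    "T = TD \<Longrightarrow> even (sum_list d) \<and> sum_list d \<ge> 6"
  using assms unfolding valid_jordan_type_def by (auto split: ctype.splits)

lemma ne_theta: "non_even T d \<Longrightarrow> Theta1 T d \<noteq> {}"
  unfolding non_even_def Theta1_def by blast

theorem lemma3p2:
  fixes T :: ctype and d :: "nat list"
  assumes "valid_jordan_type T d" and "non_even T d"
  shows "((T = TA
           \<or> (T = TB \<and> (\<exists>q. odd q \<and> parity_split d q))
           \<or> (T = TC \<and> (\<exists>q. even q \<and> parity_split d q))
           \<or> (T = TD \<and> (\<exists>q. even q \<and> q \<ge> 4 \<and> parity_split d q)))
          \<longrightarrow> even (card (Theta1 T d)))
       \<and> (\<forall>t \<ge> 1. T = TD \<and> {i. i < length d \<and> odd (d ! i)} = {2 * t - 2, 2 * t - 1} \<longrightarrow>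
            (t = 1 \<longrightarrow> rank T d \<in> Theta1 T d \<and> odd (card (Theta1 T d)))
          \<and> (length d = 2 * t \<and> 2 * t \<ge> 4 \<longrightarrow>
               even (card (Theta1 T d)) \<and> rank T d - 1 \<in> Theta1 T d \<and> rank T d \<in> Theta1 T d)
          \<and> (length d > 2 * t \<and> 2 * t \<ge> 4 \<longrightarrow> even (card (Theta1 T d))))"
proof -
  note vf = valid_facts[OF assms(1)]
  have srt: "sorted_wrt (\<ge>) d" and pos: "\<forall>x\<in>set d. x > 0" using vf by auto
  have ne: "Theta1 T d \<noteq> {}" by (rule ne_theta[OF assms(2)])
  define n where "n = sum_list d div 2"
  let ?L = "hvals d"
  let ?W = "?L ! (n - 2) + ?L ! (n - 1) = 1"
  have Dfacts: "sum_list d = 2 * n \<and> n \<ge> 3 \<and> rank TD d = n" if "T = TD"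
  proof -
    have "even (sum_list d)" "sum_list d \<ge> 6" using vf(5)[OF that] by auto
    then show ?thesis unfolding n_def rank_def by auto
  qed
  have cardD: "card (Theta1 TD d) = cnt d + (if ?W then 1 else 0)" if "T = TD"
  proof -
    from Dfacts[OF that] have N: "sum_list d = 2 * n" "n \<ge> 2" by auto
    note th = thetaD[OF N]
    have "card (Theta1 TD d) = card (Suc ` G0 d) + card {i. i = n \<and> ?W}"
      unfolding th(1) by (rule card_Un_disjoint) (use th(2) finite_G0 in auto)
    then show ?thesis using card_G0 by simp
  qed
  have part1: "(T = TA
           \<or> (T = TB \<and> (\<exists>q. odd q \<and> parity_split d q))
           \<or> (T = TC \<and> (\<exists>q. even q \<and> parity_split d q))
           \<or> (T = TD \<and> (\<exists>q. even q \<and> q \<ge> 4 \<and> parity_split d q)))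
          \<longrightarrow> even (card (Theta1 T d))"
  proof (intro impI)
    assume h: "T = TA
           \<or> (T = TB \<and> (\<exists>q. odd q \<and> parity_split d q))
           \<or> (T = TC \<and> (\<exists>q. even q \<and> parity_split d q))
           \<or> (T = TD \<and> (\<exists>q. even q \<and> q \<ge> 4 \<and> parity_split d q))"
    then consider "T = TA" | q where "T = TB" "parity_split d q" | q where "T = TC" "parity_split d q"
      | q where "T = TD" "q \<ge> 4" "parity_split d q" by blast
    then show "even (card (Theta1 T d))"
    proof cases
      case 1 then show ?thesis using thetaA by simp
    next
      case 2
      have "odd (sum_list d)" using vf(3)[OF 2(1)] .
      then have "sum_list d = 2 * ((sum_list d - 1) div 2) + 1" by presburger
      from thetaB[OF this] ps_cnt[OF srt 2(2)] 2(1) show ?thesis by simp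
    next
      case 3
      have "even (sum_list d) \<and> sum_list d \<ge> 2" using vf(4)[OF 3(1)] .
      then have "sum_list d = 2 * (sum_list d div 2)" "sum_list d div 2 \<ge> 1" by auto
      from thetaC[OF this] ps_cnt[OF srt 3(2)] 3(1) show ?thesis by simp
    next
      case 4
      from Dfacts[OF 4(1)] have N: "sum_list d = 2 * n" "n \<ge> 2" by auto
      have "{i. i < length d \<and> odd (d ! i)} = {..<q}"
      proof (rule set_eqI)
        fix i
        have "q \<le> length d" "\<forall>i<q. odd (d ! i)" "\<forall>i. q \<le> i \<and> i < length d \<longrightarrow> even (d ! i)"
          using 4(3) unfolding parity_split_def by blast+
        then show "i \<in> {i. i < length d \<and> odd (d ! i)} \<longleftrightarrow> i \<in> {..<q}"
          by (cases "i < q") auto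
      qed
      then have "card {j. j < sum_list d \<and> ?L ! j = 0} = q" using zeros[of d] by simp
      then have "\<not> ?W" using D1[OF N] 4(2) by simp
      then show ?thesis using cardD[OF 4(1)] ps_cnt[OF srt 4(3)] 4(1) by simp
    qed
  qed
  have part2: "T = TD \<and> {i. i < length d \<and> odd (d ! i)} = {2 * t - 2, 2 * t - 1} \<longrightarrow>
            (t = 1 \<longrightarrow> rank T d \<in> Theta1 T d \<and> odd (card (Theta1 T d)))
          \<and> (length d = 2 * t \<and> 2 * t \<ge> 4 \<longrightarrow>
               even (card (Theta1 T d)) \<and> rank T d - 1 \<in> Theta1 T d \<and> rank T d \<in> Theta1 T d)
          \<and> (length d > 2 * t \<and> 2 * t \<ge> 4 \<longrightarrow> even (card (Theta1 T d)))" if t: "t \<ge> 1" for t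
  proof (intro impI)
    assume h: "T = TD \<and> {i. i < length d \<and> odd (d ! i)} = {2 * t - 2, 2 * t - 1}"
    then have TD: "T = TD" and O: "{i. i < length d \<and> odd (d ! i)} = {2 * t - 2, 2 * t - 1}" by auto
    from Dfacts[OF TD] have N: "sum_list d = 2 * n" "n \<ge> 2" and r: "rank TD d = n" by auto
    have "card {2 * t - 2, 2 * t - 1} = 2" using t by auto
    then have Z: "card {j. j < sum_list d \<and> ?L ! j = 0} = 2" using zeros[of d] O by simp
    note z = D2[OF N Z]
    have W: "?W" if "\<exists>m\<in>set d. even m"
    proof -
      from that obtain m where "m \<in> set d" "even m" by auto
      moreover then have "m > 0" using pos by auto
      ultimately have "m \<ge> 2" by (metis One_nat_def Suc_1 Suc_leI le_neq_implies_less odd_one)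
      then have "1 \<in> set ?L" unfolding one_in using \<open>m \<in> set d\<close> \<open>even m\<close> by auto
      then have "?L ! (n - 2) \<le> 1" using D3[OF N z(1)] by simp
      then show ?thesis using z by simp
    qed
    have inO: "i < length d \<and> odd (d ! i) \<longleftrightarrow> i = 2 * t - 2 \<or> i = 2 * t - 1" for i
      using O by blast
    have nT: "n \<in> Theta1 TD d" if ?W using thetaD[OF N] that by auto
    have c1: "t = 1 \<longrightarrow> rank T d \<in> Theta1 T d \<and> odd (card (Theta1 T d))"
    proof
      assume t1: "t = 1"
      have l2: "2 \<le> length d" using inO[of 1] t1 by auto
      have o2: "\<forall>i<2. odd (d ! i)"
      proof (intro allI impI)
        fix i :: nat assume "i < 2"
        then have "i = 0 \<or> i = 1" by auto
        then have "i = 2 * t - 2 \<or> i = 2 * t - 1" using t1 by auto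
        then show "odd (d ! i)" using inO[of i] by blast
      qed
      have e2: "\<forall>i. 2 \<le> i \<and> i < length d \<longrightarrow> even (d ! i)"
      proof (intro allI impI)
        fix i assume i: "2 \<le> i \<and> i < length d"
        then have "\<not> (i = 2 * t - 2 \<or> i = 2 * t - 1)" using t1 by auto
        then show "even (d ! i)" using inO[of i] i by blast
      qed
      have "parity_split d 2" unfolding parity_split_def using l2 o2 e2 by blast
      then have ec: "even (cnt d)" by (rule ps_cnt[OF srt])
      show "rank T d \<in> Theta1 T d \<and> odd (card (Theta1 T d))"
      proof (cases ?W)
        case True
        then show ?thesis using nT cardD[OF TD] ec TD r by simp
      next
        case False
        then have "\<forall>m\<in>set d. odd m" using W by blast
        from vals_none[of d "\<lambda>v. 0 \<le> v"] this have "cnt d = 0" by (simp add: cnt_def)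
        then have "card (Theta1 TD d) = 0" using cardD[OF TD] False by simp
        moreover have "finite (Theta1 TD d)" by (simp add: Theta1_def)
        ultimately show ?thesis using ne TD by simp
      qed
    qed
    have big: "even (card (Theta1 T d)) \<and> ?W" if t2: "t \<ge> 2"
    proof -
      have "0 < length d" using inO[of "2*t-1"] by auto
      moreover have "even (d ! 0)" using inO[of 0] t2 \<open>0 < length d\<close> by auto
      ultimately have Wt: ?W using W by (meson nth_mem)
      have "odd (cnt d)" by (rule two_odd_cnt[OF srt t2 O])
      then show ?thesis using cardD[OF TD] Wt TD by simp
    qed
    have c2: "length d = 2 * t \<and> 2 * t \<ge> 4 \<longrightarrow>
               even (card (Theta1 T d)) \<and> rank T d - 1 \<in> Theta1 T d \<and> rank T d \<in> Theta1 T d"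
    proof
      assume "length d = 2 * t \<and> 2 * t \<ge> 4"
      then have t2: "t \<ge> 2" by auto
      note b = big[OF t2]
      have l1: "n - 1 < n" "1 \<le> n - 1" "n - 1 + 1 = n" "n - 1 - 1 = n - 2" "n - 1 \<noteq> 0" using N by auto
      have "wt TD d (n - 1) = hc d (n - 1) - hc d n" unfolding wt_def r using l1 by simp
      also have "\<dots> = ?L ! (n - 2) - ?L ! (n - 1)" unfolding hc_def using l1 by simp
      also have "\<dots> = 1" using b z(1) by simp
      finally have "wt TD d (n - 1) = 1" .
      then have "n - 1 \<in> Theta1 TD d" unfolding Theta1_def r using l1 by simp
      then show "even (card (Theta1 T d)) \<and> rank T d - 1 \<in> Theta1 T d \<and> rank T d \<in> Theta1 T d"
        using b nT TD r by simp
    qed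
    have c3: "length d > 2 * t \<and> 2 * t \<ge> 4 \<longrightarrow> even (card (Theta1 T d))"
      using big by auto
    show "(t = 1 \<longrightarrow> rank T d \<in> Theta1 T d \<and> odd (card (Theta1 T d)))
          \<and> (length d = 2 * t \<and> 2 * t \<ge> 4 \<longrightarrow>
               even (card (Theta1 T d)) \<and> rank T d - 1 \<in> Theta1 T d \<and> rank T d \<in> Theta1 T d)
          \<and> (length d > 2 * t \<and> 2 * t \<ge> 4 \<longrightarrow> even (card (Theta1 T d)))"
      using c1 c2 c3 by blast
  qed
  show ?thesis using part1 part2 by blast
qed

end
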